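(* Let $d\in T^{W_P}$ and $q=\alpha_1(d)$. Then, as rational functions on $Z_d$, $$\mathcal F_d\circ\pi_R=W_q\circ\pi_L,\qquad W_q=\frac{p_1}{p_0}+\sum_{l=1}^{m-1}\frac{p_{l+1}p_{2m-1-l}}{p_lp_{2m-1-l}-p_{l-1}p_{2m-l}+\dots+(-1)^lp_0p_{2m-1}}+q\frac{p_1}{p_{2m-1}},$$ $W_q$ being regarded as a rational function on $\mathbb P^{2m-1}$ (it is homogeneous of degree $0$ in the $p_k$).
   Context: Fix an integer $m\ge 2$. Let $V=\mathbb C^{2m}$ and let $J$ be the $2m\times 2m$ matrix with $J_{i,2m+1-i}=(-1)^i$ for $1\le i\le 2m$ and all other entries $0$. Let $G=\mathrm{PSp}(V,J)\cong\mathrm{PSp}_{2m}(\mathbb C)$, whose elements are represented by matrices. Let $E_{i,j}$ denote matrix units, $e_i=E_{i,i+1}+E_{2m-i,2m-i+1}$ for $1\le i\le m-1$, $e_m=E_{m,m+1}$, $f_i=e_i^{T}$, $x_i(a)=\exp(ae_i)$, $y_i(a)=\exp(af_i)$. Let $B_+=TU_+$ and $B_-=TU_-$ be the upper resp. lower triangular elements of $G$, with $U_\pm$ their unipotent radicals and $T$ the diagonal elements $(d_{ij})$ with $d_{ii}=d_{2m+1-i,2m+1-i}^{-1}$. The Weyl group $W$ is generated by $s_1,\dots,s_m$ with representatives $\dot s_i=y_i(-1)x_i(1)y_i(-1)$; for $w=s_{i_1}\cdots s_{i_k}$ reduced, $\dot w=\dot s_{i_1}\cdots\dot s_{i_k}$.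 Let $W_P=\langle s_2,\dots,s_m\rangle$, $w_P$ its longest element, $w_0$ the longest element of $W$. Let $T^{W_P}$ be the $W_P$-fixed part of $T$, and $\alpha_1(d)=d_{11}/d_{22}$. For $d\in T^{W_P}$ let $Z_d=B_-\dot w_0\cap U_+d\dot w_PU_-$. The open Richardson variety is $\mathcal R=(B_+\dot w_PB_-\cap B_-\dot w_0B_-)/B_-\subset G/B_-$, and $\pi_R:Z_d\to\mathcal R$, $z\mapsto zB_-$, is an isomorphism. Each $z\in Z_d$ is written uniquely as $z=u_1\dot w_Pd\bar u_2$ with $u_1\in U_+\cap\dot w_PU_+\dot w_P^{-1}$ and $\bar u_2\in U_-$. For $u\in U_+$ put $e_i^*(u)=u_{i,i+1}$, and for $\bar u\in U_-$ put $f_i^*(\bar u)=\bar u_{i+1,i}$. The superpotential is $\mathcal F_d(\pi_R(z))=\sum_{i=1}^m e_i^*(u_1)+\sum_{i=1}^m f_i^*(\bar u_2)$. Plücker coordinates: for a matrix $g$, $p_k(g)=g_{2m,2m-k}$ ($0\le k\le 2m-1$); $\pi_L:Z_d\to\mathbb P^{2m-1}$, $z\mapsto(p_0(z):\dots:p_{2m-1}(z))$. *)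

theory Defs
  imports "Jordan_Normal_Form.Matrix"
begin

text \<open>All matrices are 2m x 2m complex matrices.  We use the paper's 1-based
  indices: entry (i,j) of the paper is entry (i-1,j-1) of a JNF matrix.\<close>

definition ent :: "complex mat \<Rightarrow> nat \<Rightarrow> nat \<Rightarrow> complex" where
  "ent g i j = g $$ (i - 1, j - 1)"

definition Emat :: "nat \<Rightarrow> nat \<Rightarrow> nat \<Rightarrow> complex mat" where
  "Emat m i j = mat (2*m) (2*m) (\<lambda>(a,b). if a + 1 = i \<and> b + 1 = j then 1 else 0)"

definition Jmat :: "nat \<Rightarrow> complex mat" where
  "Jmat m = mat (2*m) (2*m) (\<lambda>(a,b). if a + b + 1 = 2*m then (-1)^(a+1) else 0)"

definition emat :: "nat \<Rightarrow> nat \<Rightarrow> complex mat" where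
  "emat m i = (if i = m then Emat m m (m+1)
               else Emat m i (i+1) + Emat m (2*m-i) (2*m-i+1))"

definition fmat :: "nat \<Rightarrow> nat \<Rightarrow> complex mat" where
  "fmat m i = transpose_mat (emat m i)"

text \<open>Matrix exponential of an n x n nilpotent matrix A: since A^n = 0 the
  exponential series terminates, exp A = sum_{k<=n} A^k / k!.  The matrices
  a e_i, a f_i are nilpotent, so this is exactly exp.\<close>
definition mexp_nilp :: "nat \<Rightarrow> complex mat \<Rightarrow> complex mat" where
  "mexp_nilp n A = mat n n (\<lambda>(i,j). \<Sum>k\<le>n. (A ^\<^sub>m k) $$ (i,j) / of_nat (fact k))"

definition xgen :: "nat \<Rightarrow> nat \<Rightarrow> complex \<Rightarrow> complex mat" where
  "xgen m i a = mexp_nilp (2*m) (a \<cdot>\<^sub>m emat m i)"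

definition ygen :: "nat \<Rightarrow> nat \<Rightarrow> complex \<Rightarrow> complex mat" where
  "ygen m i a = mexp_nilp (2*m) (a \<cdot>\<^sub>m fmat m i)"

definition sdot :: "nat \<Rightarrow> nat \<Rightarrow> complex mat" where
  "sdot m i = ygen m i (-1) * xgen m i 1 * ygen m i (-1)"

definition wordmat :: "nat \<Rightarrow> nat list \<Rightarrow> complex mat" where
  "wordmat m w = foldr (\<lambda>i M. sdot m i * M) w (1\<^sub>m (2*m))"

text \<open>Reduced words: w_0 = (s_1 ... s_m)^m (a power c^{h/2} of a Coxeter
  element, h = 2m, which is a reduced word for the longest element of type C_m),
  and w_P = (s_2 ... s_m)^(m-1), the analogous reduced word in W_P of type C_{m-1}.
  By Tits' lemma the representative does not depend on the reduced word.\<close>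
definition w0dot :: "nat \<Rightarrow> complex mat" where
  "w0dot m = wordmat m (concat (replicate m [1..<m+1]))"

definition wPdot :: "nat \<Rightarrow> complex mat" where
  "wPdot m = wordmat m (concat (replicate (m-1) [2..<m+1]))"

definition Sp :: "nat \<Rightarrow> complex mat set" where
  "Sp m = {g. g \<in> carrier_mat (2*m) (2*m) \<and> transpose_mat g * Jmat m * g = Jmat m}"

definition Tor :: "nat \<Rightarrow> complex mat set" where
  "Tor m = {d \<in> Sp m. (\<forall>i\<in>{1..2*m}. \<forall>j\<in>{1..2*m}. i \<noteq> j \<longrightarrow> ent d i j = 0)
            \<and> (\<forall>i\<in>{1..2*m}. ent d i i * ent d (2*m+1-i) (2*m+1-i) = 1)}"

text \<open>W_P-fixed part of T: fixed under conjugation by the generators s_2..s_m.\<close>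
definition TorWP :: "nat \<Rightarrow> complex mat set" where
  "TorWP m = {d \<in> Tor m. \<forall>i\<in>{2..m}. sdot m i * d = d * sdot m i}"

definition Uplus :: "nat \<Rightarrow> complex mat set" where
  "Uplus m = {u \<in> Sp m. (\<forall>i\<in>{1..2*m}. \<forall>j\<in>{1..2*m}. j < i \<longrightarrow> ent u i j = 0)
             \<and> (\<forall>i\<in>{1..2*m}. ent u i i = 1)}"

definition Uminus :: "nat \<Rightarrow> complex mat set" where
  "Uminus m = {u \<in> Sp m. (\<forall>i\<in>{1..2*m}. \<forall>j\<in>{1..2*m}. i < j \<longrightarrow> ent u i j = 0)
             \<and> (\<forall>i\<in>{1..2*m}. ent u i i = 1)}"

definition Bminus :: "nat \<Rightarrow> complex mat set" where
  "Bminus m = {b \<in> Sp m. (\<forall>i\<in>{1..2*m}. \<forall>j\<in>{1..2*m}. i < j \<longrightarrow> ent b i j = 0)}"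

text \<open>U_+ \<inter> w_P U_+ w_P^{-1}.\<close>
definition UplusWP :: "nat \<Rightarrow> complex mat set" where
  "UplusWP m = {u \<in> Uplus m. \<exists>v\<in>Uplus m. u * wPdot m = wPdot m * v}"

definition Zd :: "nat \<Rightarrow> complex mat \<Rightarrow> complex mat set" where
  "Zd m d = {z. (\<exists>b\<in>Bminus m. z = b * w0dot m)
               \<and> (\<exists>u\<in>Uplus m. \<exists>u'\<in>Uminus m. z = u * d * wPdot m * u')}"

definition alpha1 :: "complex mat \<Rightarrow> complex" where
  "alpha1 d = ent d 1 1 / ent d 2 2"

definition plk :: "nat \<Rightarrow> complex mat \<Rightarrow> nat \<Rightarrow> complex" where
  "plk m g k = ent g (2*m) (2*m - k)"

text \<open>Superpotential value F_d(pi_R(z)) computed from the decomposition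
  z = u1 w_P d u2.\<close>
definition Fsum :: "nat \<Rightarrow> complex mat \<Rightarrow> complex mat \<Rightarrow> complex" where
  "Fsum m u1 u2 = (\<Sum>i=1..m. ent u1 i (i+1)) + (\<Sum>i=1..m. ent u2 (i+1) i)"

definition Dden :: "nat \<Rightarrow> (nat \<Rightarrow> complex) \<Rightarrow> nat \<Rightarrow> complex" where
  "Dden m p l = (\<Sum>j=0..l. (-1)^j * p (l - j) * p (2*m - 1 - l + j))"

definition Wq :: "nat \<Rightarrow> complex \<Rightarrow> (nat \<Rightarrow> complex) \<Rightarrow> complex" where
  "Wq m q p = p 1 / p 0
     + (\<Sum>l=1..m-1. p (l+1) * p (2*m-1-l) / Dden m p l)
     + q * p 1 / p (2*m-1)"

end

theory Submission
  imports Defs "Jordan_Normal_Form.Determinant"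
begin


lemma mult_entry:
  assumes "A \<in> carrier_mat n k" "B \<in> carrier_mat k n'" "i < n" "j < n'"
  shows "(A * B) $$ (i,j) = (\<Sum>l<k. A $$ (i,l) * B $$ (l,j))"
  using assms by (auto simp: scalar_prod_def lessThan_atLeast0 intro!: sum.cong)

definition spm :: "nat \<Rightarrow> (nat \<Rightarrow> nat) \<Rightarrow> (nat \<Rightarrow> complex) \<Rightarrow> complex mat" where
  "spm n p s = mat n n (\<lambda>(r,c). if c = p r then s r else 0)"

lemma spm_carrier[simp]: "spm n p s \<in> carrier_mat n n"
  by (simp add: spm_def)

lemma spm_index[simp]: "r < n \<Longrightarrow> c < n \<Longrightarrow> spm n p s $$ (r,c) = (if c = p r then s r else 0)"
  by (simp add: spm_def)

lemma spm_dim[simp]: "dim_row (spm n p s) = n" "dim_col (spm n p s) = n"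
  by (simp_all add: spm_def)

lemma spm_mult:
  assumes "\<forall>r<n. p r < n"
  shows "spm n p s * spm n p' s' = spm n (\<lambda>r. p' (p r)) (\<lambda>r. s r * s' (p r))"
proof (rule eq_matI)
  fix i j assume ij: "i < dim_row (spm n (\<lambda>r. p' (p r)) (\<lambda>r. s r * s' (p r)))"
     "j < dim_col (spm n (\<lambda>r. p' (p r)) (\<lambda>r. s r * s' (p r)))"
  hence i: "i < n" and j: "j < n" by auto
  have "(spm n p s * spm n p' s') $$ (i,j) = (\<Sum>l<n. spm n p s $$ (i,l) * spm n p' s' $$ (l,j))"
    by (rule mult_entry[OF spm_carrier spm_carrier i j])
  also have "\<dots> = (\<Sum>l<n. if l = p i then s i * spm n p' s' $$ (l,j) else 0)"
    using i by (intro sum.cong) auto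
  also have "\<dots> = s i * spm n p' s' $$ (p i, j)"
    using assms i by simp
  also have "\<dots> = spm n (\<lambda>r. p' (p r)) (\<lambda>r. s r * s' (p r)) $$ (i,j)"
    using assms i j by auto
  finally show "(spm n p s * spm n p' s') $$ (i,j) = spm n (\<lambda>r. p' (p r)) (\<lambda>r. s r * s' (p r)) $$ (i,j)" .
qed auto

lemma spm_one: "1\<^sub>m n = spm n (\<lambda>r. r) (\<lambda>r. 1)"
  by (rule eq_matI) auto

lemma pow_zero_mat:
  assumes A: "A \<in> carrier_mat n n" and AA: "A * A = 0\<^sub>m n n"
  shows "A ^\<^sub>m (Suc (Suc k)) = 0\<^sub>m n n"
proof (induction k)
  case 0 thus ?case using A AA by simp
next
  case (Suc k)
  have "A ^\<^sub>m Suc (Suc (Suc k)) = A ^\<^sub>m Suc (Suc k) * A" by simp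
  also have "\<dots> = 0\<^sub>m n n" using Suc A by simp
  finally show ?case .
qed


lemma sum_if2_right:
  fixes g :: "nat \<Rightarrow> complex"
  shows "(\<Sum>l<n. g l * (if l = a then x else if l = b \<and> Q then y else 0)) =
    (if a < n then g a * x else 0) + (if Q \<and> b < n \<and> b \<noteq> a then g b * y else 0)"
proof -
  have "(\<Sum>l<n. g l * (if l = a then x else if l = b \<and> Q then y else 0)) =
        (\<Sum>l<n. (if l = a then g l * x else 0) + (if l = b then (if Q \<and> b \<noteq> a then g l * y else 0) else 0))"
    by (intro sum.cong) auto
  also have "\<dots> = (if a < n then g a * x else 0) + (if Q \<and> b < n \<and> b \<noteq> a then g b * y else 0)"
    by (simp add: sum.distrib)
  finally show ?thesis .
qed

lemma sum_if2_left:
  fixes g :: "nat \<Rightarrow> complex"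
  shows "(\<Sum>l<n. (if l = a then x else if l = b \<and> Q then y else 0) * g l) =
    (if a < n then x * g a else 0) + (if Q \<and> b < n \<and> b \<noteq> a then y * g b else 0)"
proof -
  have "(\<Sum>l<n. (if l = a then x else if l = b \<and> Q then y else 0) * g l) =
        (\<Sum>l<n. (if l = a then x * g l else 0) + (if l = b then (if Q \<and> b \<noteq> a then y * g l else 0) else 0))"
    by (intro sum.cong) auto
  also have "\<dots> = (if a < n then x * g a else 0) + (if Q \<and> b < n \<and> b \<noteq> a then y * g b else 0)"
    by (simp add: sum.distrib)
  finally show ?thesis .
qed

lemma emat_carrier[simp]: "emat m i \<in> carrier_mat (2*m) (2*m)"
  by (simp add: emat_def Emat_def)

lemma emat_dim[simp]: "dim_row (emat m i) = 2*m" "dim_col (emat m i) = 2*m"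
  by (simp_all add: emat_def Emat_def)

lemma fmat_dim[simp]: "dim_row (fmat m i) = 2*m" "dim_col (fmat m i) = 2*m"
  by (auto simp: fmat_def)

lemma fmat_carrier[simp]: "fmat m i \<in> carrier_mat (2*m) (2*m)"
  by (simp add: fmat_def)

lemma emat_index:
  assumes "1 \<le> i" "i \<le> m" "r < 2*m" "c < 2*m"
  shows "emat m i $$ (r,c) = (if (r = i - 1 \<or> r = 2*m-i-1) \<and> c = r + 1 then 1 else 0)"
  using assms by (auto simp: emat_def Emat_def)

lemma fmat_index:
  assumes "1 \<le> i" "i \<le> m" "r < 2*m" "c < 2*m"
  shows "fmat m i $$ (r,c) = (if (c = i - 1 \<or> c = 2*m-i-1) \<and> r = c + 1 then 1 else 0)"
  using assms by (simp add: fmat_def emat_index)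

lemma mexp_sq0:
  assumes A: "A \<in> carrier_mat n n" and AA: "A * A = 0\<^sub>m n n" and n: "0 < n"
    and rc: "r < n" "c < n"
  shows "mexp_nilp n A $$ (r,c) = (if r = c then 1 else 0) + A $$ (r,c)"
proof -
  have s: "{..n} = insert 0 (insert 1 {2..n})" using n by auto
  have z: "\<forall>k\<in>{2..n}. (A ^\<^sub>m k) $$ (r,c) / of_nat (fact k) = 0"
  proof
    fix k assume "k \<in> {2..n}"
    then obtain j where "k = Suc (Suc j)" by (metis atLeastAtMost_iff add_2_eq_Suc le_Suc_ex)
    thus "(A ^\<^sub>m k) $$ (r,c) / of_nat (fact k) = 0" using pow_zero_mat[OF A AA] rc by simp
  qed
  have "mexp_nilp n A $$ (r,c) = (\<Sum>k\<le>n. (A ^\<^sub>m k) $$ (r,c) / of_nat (fact k))"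
    using rc by (simp add: mexp_nilp_def)
  also have "\<dots> = (A ^\<^sub>m 0) $$ (r,c) + (A ^\<^sub>m 1) $$ (r,c)"
    unfolding s using z by (simp add: sum.insert)
  also have "\<dots> = (if r = c then 1 else 0) + A $$ (r,c)"
    using A rc by simp
  finally show ?thesis .
qed

lemma sq0_emat:
  assumes "1 \<le> i" "i \<le> m"
  shows "(a \<cdot>\<^sub>m emat m i) * (a \<cdot>\<^sub>m emat m i) = 0\<^sub>m (2*m) (2*m)"
proof (rule eq_matI)
  fix r c assume "r < dim_row (0\<^sub>m (2 * m) (2 * m) :: complex mat)" "c < dim_col (0\<^sub>m (2 * m) (2 * m) :: complex mat)"
  hence rc: "r < 2*m" "c < 2*m" by auto
  have "((a \<cdot>\<^sub>m emat m i) * (a \<cdot>\<^sub>m emat m i)) $$ (r,c) =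
     (\<Sum>l<2*m. (a \<cdot>\<^sub>m emat m i) $$ (r,l) * (a \<cdot>\<^sub>m emat m i) $$ (l,c))"
    by (rule mult_entry) (use rc in auto)
  also have "\<dots> = 0"
    using assms rc by (intro sum.neutral) (auto simp: emat_index; presburger)
  finally show "((a \<cdot>\<^sub>m emat m i) * (a \<cdot>\<^sub>m emat m i)) $$ (r,c) = 0\<^sub>m (2 * m) (2 * m) $$ (r,c)"
    using rc by simp
qed auto

lemma sq0_fmat:
  assumes "1 \<le> i" "i \<le> m"
  shows "(a \<cdot>\<^sub>m fmat m i) * (a \<cdot>\<^sub>m fmat m i) = 0\<^sub>m (2*m) (2*m)"
proof (rule eq_matI)
  fix r c assume "r < dim_row (0\<^sub>m (2 * m) (2 * m) :: complex mat)" "c < dim_col (0\<^sub>m (2 * m) (2 * m) :: complex mat)"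
  hence rc: "r < 2*m" "c < 2*m" by auto
  have "((a \<cdot>\<^sub>m fmat m i) * (a \<cdot>\<^sub>m fmat m i)) $$ (r,c) =
     (\<Sum>l<2*m. (a \<cdot>\<^sub>m fmat m i) $$ (r,l) * (a \<cdot>\<^sub>m fmat m i) $$ (l,c))"
    by (rule mult_entry) (use rc in auto)
  also have "\<dots> = 0"
    using assms rc by (intro sum.neutral) (auto simp: fmat_index; presburger)
  finally show "((a \<cdot>\<^sub>m fmat m i) * (a \<cdot>\<^sub>m fmat m i)) $$ (r,c) = 0\<^sub>m (2 * m) (2 * m) $$ (r,c)"
    using rc by simp
qed auto


definition inP :: "nat \<Rightarrow> nat \<Rightarrow> nat \<Rightarrow> bool" where
  "inP m i r \<longleftrightarrow> r = i - 1 \<or> r = 2*m-i-1"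

definition piS :: "nat \<Rightarrow> nat \<Rightarrow> nat \<Rightarrow> nat" where
  "piS m i r = (if r = i-1 \<or> r = 2*m-i-1 then r+1 else if r = i \<or> r = 2*m-i then r-1 else r)"

definition sgS :: "nat \<Rightarrow> nat \<Rightarrow> nat \<Rightarrow> complex" where
  "sgS m i r = (if r = i \<or> r = 2*m-i then -1 else 1)"

lemma xgen_index:
  assumes "1 \<le> i" "i \<le> m" "r < 2*m" "c < 2*m"
  shows "xgen m i 1 $$ (r,c) = (if r = c then 1 else 0) + (if inP m i r \<and> c = r + 1 then 1 else 0)"
proof -
  have "xgen m i 1 $$ (r,c) = (if r = c then 1 else 0) + (1 \<cdot>\<^sub>m emat m i) $$ (r,c)"
    unfolding xgen_def by (rule mexp_sq0) (use assms sq0_emat[OF assms(1,2)] in auto)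
  thus ?thesis using assms by (simp add: emat_index inP_def)
qed

lemma ygen_index:
  assumes "1 \<le> i" "i \<le> m" "r < 2*m" "c < 2*m"
  shows "ygen m i (-1) $$ (r,c) = (if r = c then 1 else 0) - (if inP m i c \<and> r = c + 1 then 1 else 0)"
proof -
  have "ygen m i (-1) $$ (r,c) = (if r = c then 1 else 0) + (-1 \<cdot>\<^sub>m fmat m i) $$ (r,c)"
    unfolding ygen_def by (rule mexp_sq0) (use assms sq0_fmat[OF assms(1,2)] in auto)
  thus ?thesis using assms by (simp add: fmat_index inP_def)
qed

lemma xgen_carrier[simp]: "xgen m i a \<in> carrier_mat (2*m) (2*m)"
  by (simp add: xgen_def mexp_nilp_def)
lemma ygen_carrier[simp]: "ygen m i a \<in> carrier_mat (2*m) (2*m)"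
  by (simp add: ygen_def mexp_nilp_def)

lemma xgen_dim[simp]: "dim_row (xgen m i a) = 2*m" "dim_col (xgen m i a) = 2*m"
  by (simp_all add: xgen_def mexp_nilp_def)
lemma ygen_dim[simp]: "dim_row (ygen m i a) = 2*m" "dim_col (ygen m i a) = 2*m"
  by (simp_all add: ygen_def mexp_nilp_def)

definition gfun :: "nat \<Rightarrow> nat \<Rightarrow> nat \<Rightarrow> nat \<Rightarrow> complex" where
  "gfun m i r c = ((if r = c then 1 else 0) + (if inP m i r \<and> c = r + 1 then 1 else 0))
     - (if 1 \<le> r \<and> inP m i (r-1) then (if r - 1 = c then 1 else 0) + (if inP m i (r-1) \<and> c = r then 1 else 0) else 0)"

definition Gm :: "nat \<Rightarrow> nat \<Rightarrow> complex mat" where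
  "Gm m i = mat (2*m) (2*m) (\<lambda>(r,c). gfun m i r c)"

lemma YX:
  assumes "1 \<le> i" "i \<le> m"
  shows "ygen m i (-1) * xgen m i 1 = Gm m i"
proof (rule eq_matI)
  fix r c assume "r < dim_row (Gm m i)" "c < dim_col (Gm m i)"
  hence rc: "r < 2*m" "c < 2*m" by (auto simp: Gm_def)
  have "(ygen m i (-1) * xgen m i 1) $$ (r,c) = (\<Sum>l<2*m. ygen m i (-1) $$ (r,l) * xgen m i 1 $$ (l,c))"
    by (rule mult_entry) (use rc in auto)
  also have "\<dots> = (\<Sum>l<2*m. (if l = r then 1 else if l = r - 1 \<and> (1 \<le> r \<and> inP m i (r-1)) then -1 else 0) * xgen m i 1 $$ (l,c))"
    using assms rc by (intro sum.cong) (auto simp: ygen_index)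
  also have "\<dots> = Gm m i $$ (r,c)"
    unfolding sum_if2_left using assms rc by (auto simp: xgen_index Gm_def gfun_def)
  finally show "(ygen m i (-1) * xgen m i 1) $$ (r,c) = Gm m i $$ (r,c)" .
qed (auto simp: Gm_def)

lemma sdot_abstract:
  fixes r c p1 p2 n :: nat and inq :: "nat \<Rightarrow> bool" and G :: "nat \<Rightarrow> nat \<Rightarrow> complex"
  assumes "p2 + 1 < n" "p1 = p2 \<or> p1 + 1 < p2" "r < n" "c < n"
  assumes inq_def: "\<And>x. inq x = (x = p1 \<or> x = p2)"
  assumes G_def: "\<And>r c. G r c = ((if r = c then 1 else 0) + (if inq r \<and> c = r + 1 then 1 else 0))
     - (if 1 \<le> r \<and> inq (r-1) then (if r - 1 = c then 1 else 0) + (if inq (r-1) \<and> c = r then 1 else 0) else (0::complex))"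
  shows "G r c + (if inq c \<and> c + 1 < n \<and> c + 1 \<noteq> c then G r (c+1) * (-1) else 0) =
     (if c = (if inq r then r+1 else if r = p1+1 \<or> r = p2+1 then r-1 else r) then (if r = p1+1 \<or> r = p2+1 then -1 else 1) else 0)"
proof -
  have pr: "(1 \<le> x \<and> inq (x-1)) = (x = p1+1 \<or> x = p2+1)" for x unfolding inq_def by auto
  have G: "G x y = (if x = y then 1 else 0) + (if inq x \<and> y = x + 1 then 1 else 0)
     - (if x = p1+1 \<or> x = p2+1 then (if y = x - 1 then 1 else 0) + (if y = x then 1 else 0) else 0)" for x y
    unfolding G_def pr by (auto simp: inq_def)
  have ex: "\<not> (inq x \<and> (x = p1+1 \<or> x = p2+1))" for x using assms(2) unfolding inq_def by auto
  show ?thesis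
  proof (cases "inq r")
    case True
    hence nr: "\<not> (r = p1+1 \<or> r = p2+1)" using ex by blast
    show ?thesis
    proof (cases "inq c")
      case True
      thus ?thesis using \<open>inq r\<close> nr ex[of c] ex[of r] assms(1,2) unfolding G inq_def by auto
    next
      case False
      thus ?thesis using \<open>inq r\<close> nr unfolding G by auto
    qed
  next
    case False
    note nq = False
    show ?thesis
    proof (cases "r = p1+1 \<or> r = p2+1")
      case True
      show ?thesis
      proof (cases "inq c")
        case True
        thus ?thesis using nq \<open>r = p1+1 \<or> r = p2+1\<close> ex[of c] assms(1,2) unfolding G inq_def by auto
      next
        case False
        thus ?thesis using nq \<open>r = p1+1 \<or> r = p2+1\<close> unfolding G by auto
      qed
    next
      case False
      show ?thesis
      proof (cases "inq c")
        case True
        thus ?thesis using nq False ex[of c] assms(1,2) unfolding G inq_def by auto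
      next
        case False
        thus ?thesis using nq \<open>\<not>(r = p1+1 \<or> r = p2+1)\<close> unfolding G by auto
      qed
    qed
  qed
qed

lemma sdot_spm:
  assumes "1 \<le> i" "i \<le> m"
  shows "sdot m i = spm (2*m) (piS m i) (sgS m i)"
proof (rule eq_matI)
  fix r c assume "r < dim_row (spm (2*m) (piS m i) (sgS m i))" "c < dim_col (spm (2*m) (piS m i) (sgS m i))"
  hence rc: "r < 2*m" "c < 2*m" by auto
  have "sdot m i $$ (r,c) = (Gm m i * ygen m i (-1)) $$ (r,c)"
    unfolding sdot_def YX[OF assms] ..
  also have "\<dots> = (\<Sum>l<2*m. Gm m i $$ (r,l) * ygen m i (-1) $$ (l,c))"
    by (rule mult_entry) (use rc in \<open>auto simp: Gm_def\<close>)
  also have "\<dots> = (\<Sum>l<2*m. Gm m i $$ (r,l) * (if l = c then 1 else if l = c + 1 \<and> inP m i c then -1 else 0))"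
    using assms rc by (intro sum.cong) (auto simp: ygen_index)
  also have "\<dots> = gfun m i r c + (if inP m i c \<and> c + 1 < 2*m \<and> c + 1 \<noteq> c then gfun m i r (c+1) * (-1) else 0)"
    unfolding sum_if2_right using rc by (simp add: Gm_def)
  also have "\<dots> = (if c = (if inP m i r then r+1 else if r = (i-1)+1 \<or> r = (2*m-i-1)+1 then r-1 else r) then (if r = (i-1)+1 \<or> r = (2*m-i-1)+1 then -1 else 1) else 0)"
  proof (rule sdot_abstract)
    show "2*m-i-1+1 < 2*m" using assms by auto
    show "i-1 = 2*m-i-1 \<or> i-1+1 < 2*m-i-1" using assms by (cases "i = m") auto
  qed (use rc in \<open>auto simp: inP_def gfun_def\<close>)
  also have "\<dots> = spm (2*m) (piS m i) (sgS m i) $$ (r,c)"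
  proof -
    have e1: "(i-1)+1 = i" "2*m-i-1+1 = 2*m-i" using assms by auto
    show ?thesis unfolding e1 using rc by (simp add: piS_def sgS_def inP_def)
  qed
  finally show "sdot m i $$ (r,c) = spm (2*m) (piS m i) (sgS m i) $$ (r,c)" .
qed (auto simp: sdot_def)


definition spme :: "nat \<Rightarrow> (nat \<Rightarrow> nat) \<Rightarrow> (nat \<Rightarrow> nat) \<Rightarrow> complex mat" where
  "spme n p e = spm n p (\<lambda>r. (-1)^(e r))"

lemma spme_carrier[simp]: "spme n p e \<in> carrier_mat n n"
  by (simp add: spme_def)

lemma spme_mult:
  assumes "\<forall>r<n. p r < n"
  shows "spme n p e * spme n p' e' = spme n (\<lambda>r. p' (p r)) (\<lambda>r. e r + e' (p r))"
  unfolding spme_def using spm_mult[OF assms] by (simp add: power_add)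

lemma spme_cong:
  assumes "\<And>r. r < n \<Longrightarrow> p r = p' r \<and> even (e r) = even (e' r)"
  shows "spme n p e = spme n p' e'"
proof (rule eq_matI)
  fix i j assume "i < dim_row (spme n p' e')" "j < dim_col (spme n p' e')"
  hence ij: "i < n" "j < n" by (auto simp: spme_def)
  have "(-1::complex)^(e i) = (-1)^(e' i)"
    using assms[OF ij(1)] by (simp add: minus_one_power_iff)
  thus "spme n p e $$ (i,j) = spme n p' e' $$ (i,j)"
    using assms[OF ij(1)] ij by (simp add: spme_def)
qed (auto simp: spme_def)

definition spmi :: "nat \<Rightarrow> (int \<Rightarrow> int) \<Rightarrow> (int \<Rightarrow> int) \<Rightarrow> complex mat" where
  "spmi n f e = spme n (\<lambda>r. nat (f (int r))) (\<lambda>r. nat (e (int r)))"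

lemma spmi_carrier[simp]: "spmi n f e \<in> carrier_mat n n"
  by (simp add: spmi_def)

lemma spmi_mult:
  assumes "\<And>x. 0 \<le> x \<Longrightarrow> x < int n \<Longrightarrow> 0 \<le> f x \<and> f x < int n \<and> 0 \<le> e x \<and> 0 \<le> h (f x)"
  shows "spmi n f e * spmi n g h = spmi n (\<lambda>x. g (f x)) (\<lambda>x. e x + h (f x))"
proof -
  have "spmi n f e * spmi n g h = spme n (\<lambda>r. nat (g (int (nat (f (int r)))))) (\<lambda>r. nat (e (int r)) + nat (h (int (nat (f (int r))))))"
    unfolding spmi_def
  proof (rule spme_mult, intro allI impI)
    fix r assume "r < n"
    hence "0 \<le> int r" "int r < int n" by auto
    from assms[OF this] show "nat (f (int r)) < n" by auto
  qed
  also have "\<dots> = spmi n (\<lambda>x. g (f x)) (\<lambda>x. e x + h (f x))"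
    unfolding spmi_def
  proof (rule spme_cong)
    fix r assume "r < n"
    hence "0 \<le> int r" "int r < int n" by auto
    from assms[OF this] show "nat (g (int (nat (f (int r))))) = nat (g (f (int r))) \<and>
      even (nat (e (int r)) + nat (h (int (nat (f (int r)))))) = even (nat (e (int r) + h (f (int r))))"
      by (simp add: nat_add_distrib)
  qed
  finally show ?thesis .
qed

lemma spmi_cong:
  assumes "\<And>x. 0 \<le> x \<Longrightarrow> x < int n \<Longrightarrow> f x = f' x \<and> 0 \<le> e x \<and> 0 \<le> e' x \<and> even (e x) = even (e' x)"
  shows "spmi n f e = spmi n f' e'"
  unfolding spmi_def
proof (rule spme_cong)
  fix r assume "r < n"
  hence "0 \<le> int r" "int r < int n" by auto
  from assms[OF this] show "nat (f (int r)) = nat (f' (int r)) \<and> even (nat (e (int r))) = even (nat (e' (int r)))"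
    by (simp add: even_nat_iff)
qed

definition piSi :: "int \<Rightarrow> int \<Rightarrow> int \<Rightarrow> int" where
  "piSi m i x = (if x = i-1 \<or> x = 2*m-i-1 then x+1 else if x = i \<or> x = 2*m-i then x-1 else x)"
definition eSi :: "int \<Rightarrow> int \<Rightarrow> int \<Rightarrow> int" where
  "eSi m i x = (if x = i \<or> x = 2*m-i then 1 else 0)"

lemma sdot_spmi:
  assumes "1 \<le> i" "i \<le> m"
  shows "sdot m i = spmi (2*m) (piSi (int m) (int i)) (eSi (int m) (int i))"
proof -
  have "sdot m i = spme (2*m) (piS m i) (\<lambda>r. if r = i \<or> r = 2*m-i then 1 else 0)"
    unfolding sdot_spm[OF assms] spme_def
    by (intro arg_cong[where f="spm (2*m) (piS m i)"]) (auto simp: sgS_def)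
  also have "\<dots> = spmi (2*m) (piSi (int m) (int i)) (eSi (int m) (int i))"
    unfolding spmi_def
  proof (rule spme_cong)
    fix r assume r: "r < 2*m"
    show "piS m i r = nat (piSi (int m) (int i) (int r)) \<and>
      even (if r = i \<or> r = 2*m-i then 1 else 0 :: nat) = even (nat (eSi (int m) (int i) (int r)))"
      using assms r unfolding piS_def piSi_def eSi_def by auto
  qed
  finally show ?thesis .
qed

lemma sdot_carrier[simp]: "sdot m i \<in> carrier_mat (2*m) (2*m)"
  unfolding sdot_def by (rule mult_carrier_mat)+ auto

lemma wordmat_carrier[simp]: "wordmat m w \<in> carrier_mat (2*m) (2*m)"
proof (induction w)
  case Nil thus ?case by (simp add: wordmat_def)
next
  case (Cons a w)
  have "sdot m a * wordmat m w \<in> carrier_mat (2*m) (2*m)"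
    using Cons by (intro mult_carrier_mat[OF sdot_carrier])
  thus ?case by (simp add: wordmat_def)
qed

lemma wordmat_append: "wordmat m (xs @ ys) = wordmat m xs * wordmat m ys"
proof (induction xs)
  case Nil
  have "wordmat m ys = 1\<^sub>m (2*m) * wordmat m ys" using left_mult_one_mat[OF wordmat_carrier[of m ys]] by simp
  thus ?case by (simp add: wordmat_def)
next
  case (Cons x xs)
  have "wordmat m ((x # xs) @ ys) = sdot m x * wordmat m (xs @ ys)" by (simp add: wordmat_def)
  also have "\<dots> = sdot m x * (wordmat m xs * wordmat m ys)" using Cons by simp
  also have "\<dots> = (sdot m x * wordmat m xs) * wordmat m ys"
    by (rule assoc_mult_mat[symmetric, OF sdot_carrier wordmat_carrier wordmat_carrier])
  finally show ?case by (simp add: wordmat_def)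
qed

lemma wordmat_single: "wordmat m [i] = sdot m i"
  using right_mult_one_mat[OF sdot_carrier[of m i]] by (simp add: wordmat_def)

lemma wordmat_Nil: "wordmat m [] = spmi (2*m) (\<lambda>x. x) (\<lambda>x. 0)"
  by (simp add: wordmat_def spmi_def spme_def spm_one)

definition Qpi :: "int \<Rightarrow> int \<Rightarrow> int \<Rightarrow> int \<Rightarrow> int" where
  "Qpi m a j x = (if x = a-1 then j-1 else if x = 2*m-a then 2*m-j
     else if a \<le> x \<and> x < j \<and> x < m then x-1 else if 2*m-j \<le> x \<and> x < 2*m-a \<and> m \<le> x then x+1 else x)"
definition Qei :: "int \<Rightarrow> int \<Rightarrow> int \<Rightarrow> int \<Rightarrow> int" where
  "Qei m a j x = (if x = 2*m-a then j-a else if a \<le> x \<and> x < j \<and> x < m then 1 else 0)"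

lemma Q_step:
  assumes "1 \<le> a" "a \<le> m" "a \<le> j" "j \<le> m" "0 \<le> x" "x < 2*m"
  shows "piSi m j (Qpi m a j x) = Qpi m a (j+1) x"
  using assms unfolding Qpi_def piSi_def by auto

lemma Q_step_e:
  assumes "1 \<le> a" "a \<le> m" "a \<le> j" "j \<le> m" "0 \<le> x" "x < 2*m"
  shows "Qei m a j x + eSi m j (Qpi m a j x) = Qei m a (j+1) x"
  using assms unfolding Qpi_def Qei_def eSi_def by auto

lemma Q_range:
  assumes "1 \<le> a" "a \<le> m" "a \<le> j" "j \<le> m + 1" "0 \<le> x" "x < 2*m"
  shows "0 \<le> Qpi m a j x \<and> Qpi m a j x < 2*m \<and> 0 \<le> Qei m a j x"
  using assms unfolding Qpi_def Qei_def by auto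

lemma eSi_nonneg: "0 \<le> eSi m i x" by (simp add: eSi_def)

lemma word_partial:
  assumes "1 \<le> a" "a \<le> m" "a \<le> j" "j \<le> m+1"
  shows "wordmat m [a..<j] = spmi (2*m) (Qpi (int m) (int a) (int j)) (Qei (int m) (int a) (int j))"
  using assms(3,4)
proof (induction j rule: dec_induct)
  case base
  have "[a..<a] = []" by simp
  show ?case unfolding \<open>[a..<a] = []\<close> wordmat_Nil using assms
    by (intro spmi_cong) (auto simp: Qpi_def Qei_def)
next
  case (step j)
  have "wordmat m [a..<Suc j] = wordmat m [a..<j] * sdot m j"
    using step by (simp add: wordmat_append wordmat_single)
  also have "\<dots> = spmi (2*m) (Qpi (int m) (int a) (int j)) (Qei (int m) (int a) (int j)) *
      spmi (2*m) (piSi (int m) (int j)) (eSi (int m) (int j))"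
    using step assms by (simp add: sdot_spmi)
  also have "\<dots> = spmi (2*m) (\<lambda>x. piSi (int m) (int j) (Qpi (int m) (int a) (int j) x))
      (\<lambda>x. Qei (int m) (int a) (int j) x + eSi (int m) (int j) (Qpi (int m) (int a) (int j) x))"
    by (rule spmi_mult) (use step assms Q_range[of "int a" "int m" "int j"] eSi_nonneg in auto)
  also have "\<dots> = spmi (2*m) (Qpi (int m) (int a) (int (Suc j))) (Qei (int m) (int a) (int (Suc j)))"
  proof (rule spmi_cong)
    fix x assume x: "0 \<le> x" "x < int (2*m)"
    have s: "int (Suc j) = int j + 1" by simp
    show "piSi (int m) (int j) (Qpi (int m) (int a) (int j) x) = Qpi (int m) (int a) (int (Suc j)) x \<and>
       0 \<le> Qei (int m) (int a) (int j) x + eSi (int m) (int j) (Qpi (int m) (int a) (int j) x) \<and>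
       0 \<le> Qei (int m) (int a) (int (Suc j)) x \<and>
       even (Qei (int m) (int a) (int j) x + eSi (int m) (int j) (Qpi (int m) (int a) (int j) x)) =
       even (Qei (int m) (int a) (int (Suc j)) x)"
      unfolding s using Q_step[of "int a" "int m" "int j" x] Q_step_e[of "int a" "int m" "int j" x]
        Q_range[of "int a" "int m" "int j + 1" x] step assms x by auto
  qed
  finally show ?case .
qed


definition Ppi :: "int \<Rightarrow> int \<Rightarrow> int \<Rightarrow> int \<Rightarrow> int" where
  "Ppi m a k x = (if x < a-1 \<or> 2*m-a < x then x else if x-a+1 < k then m + k - x + a - 2
     else if x-a+1 < m+1-a then x-k else if k + x - a + 1 < 2*(m+1-a) then x+k
     else a-1 + 3*(m+1-a) - (x-a+1) - k - 1)"
definition Pei :: "int \<Rightarrow> int \<Rightarrow> int \<Rightarrow> int \<Rightarrow> int" where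
  "Pei m a k x = (if x < a-1 \<or> 2*m-a < x then 0 else if x-a+1 < k then x-a+1
     else if x-a+1 < m+1-a then k else if k + x - a + 1 < 2*(m+1-a) then 0 else k + x - a + 1 - (m+1-a))"

lemma P_step:
  assumes "1 \<le> a" "a \<le> m" "0 \<le> k" "k < m+1-a" "0 \<le> x" "x < 2*m"
  shows "Ppi m a k (Qpi m a (m+1) x) = Ppi m a (k+1) x"
  using assms unfolding Qpi_def Ppi_def by auto

lemma P_step_e:
  assumes "1 \<le> a" "a \<le> m" "0 \<le> k" "k < m+1-a" "0 \<le> x" "x < 2*m"
  shows "Qei m a (m+1) x + Pei m a k (Qpi m a (m+1) x) = Pei m a (k+1) x"
  using assms unfolding Qpi_def Qei_def Pei_def by auto

lemma P_range:
  assumes "1 \<le> a" "a \<le> m" "0 \<le> k" "k \<le> m+1-a" "0 \<le> x" "x < 2*m"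
  shows "0 \<le> Pei m a k x"
  using assms unfolding Pei_def by auto

lemma P_final:
  assumes "1 \<le> a" "a \<le> m" "0 \<le> x" "x < 2*m"
  shows "Ppi m a (m+1-a) x = (if x < a-1 \<or> 2*m-a < x then x else 2*m-1-x)"
    "Pei m a (m+1-a) x = (if x < a-1 \<or> 2*m-a < x then 0 else x-a+1)"
  using assms unfolding Ppi_def Pei_def by auto

lemma cox_pow:
  assumes "1 \<le> a" "a \<le> m" "k \<le> m+1-a"
  shows "wordmat m (concat (replicate k [a..<m+1])) = spmi (2*m) (Ppi (int m) (int a) (int k)) (Pei (int m) (int a) (int k))"
  using assms(3)
proof (induction k)
  case 0
  show ?case using assms
    by (simp add: wordmat_Nil, intro spmi_cong) (auto simp: Ppi_def Pei_def)
next
  case (Suc k)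
  have "wordmat m (concat (replicate (Suc k) [a..<m+1])) = wordmat m [a..<m+1] * wordmat m (concat (replicate k [a..<m+1]))"
    by (simp add: wordmat_append)
  also have "\<dots> = spmi (2*m) (Qpi (int m) (int a) (int (m+1))) (Qei (int m) (int a) (int (m+1))) *
      spmi (2*m) (Ppi (int m) (int a) (int k)) (Pei (int m) (int a) (int k))"
  proof -
    have wp: "wordmat m [a..<m+1] = spmi (2*m) (Qpi (int m) (int a) (int (m+1))) (Qei (int m) (int a) (int (m+1)))"
      by (rule word_partial) (use assms in auto)
    show ?thesis using wp Suc.IH Suc.prems by (simp del: upt_Suc)
  qed
  also have "\<dots> = spmi (2*m) (\<lambda>x. Ppi (int m) (int a) (int k) (Qpi (int m) (int a) (int (m+1)) x))
      (\<lambda>x. Qei (int m) (int a) (int (m+1)) x + Pei (int m) (int a) (int k) (Qpi (int m) (int a) (int (m+1)) x))"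
  proof (rule spmi_mult)
    fix x assume x: "0 \<le> x" "x < int (2*m)"
    have q: "0 \<le> Qpi (int m) (int a) (int (m+1)) x \<and> Qpi (int m) (int a) (int (m+1)) x < 2*int m \<and> 0 \<le> Qei (int m) (int a) (int (m+1)) x"
      by (rule Q_range) (use assms x in auto)
    have "0 \<le> Pei (int m) (int a) (int k) (Qpi (int m) (int a) (int (m+1)) x)"
      by (rule P_range) (use assms x q Suc in auto)
    with q show "0 \<le> Qpi (int m) (int a) (int (m+1)) x \<and> Qpi (int m) (int a) (int (m+1)) x < int (2*m) \<and>
      0 \<le> Qei (int m) (int a) (int (m+1)) x \<and> 0 \<le> Pei (int m) (int a) (int k) (Qpi (int m) (int a) (int (m+1)) x)"
      by simp
  qed
  also have "\<dots> = spmi (2*m) (Ppi (int m) (int a) (int (Suc k))) (Pei (int m) (int a) (int (Suc k)))"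
  proof (rule spmi_cong)
    fix x assume x: "0 \<le> x" "x < int (2*m)"
    have s: "int (Suc k) = int k + 1" "int (m+1) = int m + 1" by simp_all
    show "Ppi (int m) (int a) (int k) (Qpi (int m) (int a) (int (m+1)) x) = Ppi (int m) (int a) (int (Suc k)) x \<and>
      0 \<le> Qei (int m) (int a) (int (m+1)) x + Pei (int m) (int a) (int k) (Qpi (int m) (int a) (int (m+1)) x) \<and>
      0 \<le> Pei (int m) (int a) (int (Suc k)) x \<and>
      even (Qei (int m) (int a) (int (m+1)) x + Pei (int m) (int a) (int k) (Qpi (int m) (int a) (int (m+1)) x)) =
      even (Pei (int m) (int a) (int (Suc k)) x)"
      unfolding s using P_step[of "int a" "int m" "int k" x] P_step_e[of "int a" "int m" "int k" x]
        P_range[of "int a" "int m" "int k + 1" x] Suc assms x by auto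
  qed
  finally show ?case .
qed

lemma w0_spmi: "w0dot m = spmi (2*m) (\<lambda>x. 2*int m-1-x) (\<lambda>x. x)"
proof (cases "m = 0")
  case True thus ?thesis by (intro eq_matI) (auto simp: w0dot_def wordmat_Nil spmi_def spme_def spm_def)
next
  case False
  hence "w0dot m = spmi (2*m) (Ppi (int m) 1 (int m)) (Pei (int m) 1 (int m))"
    unfolding w0dot_def using cox_pow[of 1 m m] by simp
  also have "\<dots> = spmi (2*m) (\<lambda>x. 2*int m-1-x) (\<lambda>x. x)"
    by (rule spmi_cong) (use False P_final[of 1 "int m"] in auto)
  finally show ?thesis .
qed

lemma wP_spmi:
  assumes "2 \<le> m"
  shows "wPdot m = spmi (2*m) (\<lambda>x. if x = 0 \<or> x = 2*int m-1 then x else 2*int m-1-x)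
     (\<lambda>x. if x = 0 \<or> x = 2*int m-1 then 0 else x - 1)"
proof -
  have "wPdot m = spmi (2*m) (Ppi (int m) 2 (int (m-1))) (Pei (int m) 2 (int (m-1)))"
    unfolding wPdot_def using cox_pow[of 2 m "m-1"] assms by simp
  also have "\<dots> = spmi (2*m) (\<lambda>x. if x = 0 \<or> x = 2*int m-1 then x else 2*int m-1-x)
     (\<lambda>x. if x = 0 \<or> x = 2*int m-1 then 0 else x - 1)"
  proof (rule spmi_cong)
    fix x assume x: "0 \<le> x" "x < int (2*m)"
    have e: "int (m-1) = int m + 1 - 2" using assms by simp
    show "Ppi (int m) 2 (int (m-1)) x = (if x = 0 \<or> x = 2*int m-1 then x else 2*int m-1-x) \<and>
        0 \<le> Pei (int m) 2 (int (m-1)) x \<and> 0 \<le> (if x = 0 \<or> x = 2*int m-1 then 0 else x - 1) \<and>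
        even (Pei (int m) 2 (int (m-1)) x) = even (if x = 0 \<or> x = 2*int m-1 then 0 else x - 1)"
      unfolding e using P_final[of 2 "int m" x] assms x by auto
  qed
  finally show ?thesis .
qed


lemma diag_left:
  assumes "D \<in> carrier_mat n n" "A \<in> carrier_mat n n'" "\<And>i j. i < n \<Longrightarrow> j < n \<Longrightarrow> i \<noteq> j \<Longrightarrow> D $$ (i,j) = 0"
    "r < n" "c < n'"
  shows "(D * A) $$ (r,c) = D $$ (r,r) * A $$ (r,c)"
proof -
  have "(D * A) $$ (r,c) = (\<Sum>l<n. D $$ (r,l) * A $$ (l,c))" by (rule mult_entry) (use assms in auto)
  also have "\<dots> = (\<Sum>l<n. if l = r then D $$ (r,r) * A $$ (r,c) else 0)"
    by (rule sum.cong) (use assms in auto)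
  also have "\<dots> = D $$ (r,r) * A $$ (r,c)" using assms by simp
  finally show ?thesis .
qed

lemma diag_right:
  assumes "D \<in> carrier_mat n n" "A \<in> carrier_mat n' n" "\<And>i j. i < n \<Longrightarrow> j < n \<Longrightarrow> i \<noteq> j \<Longrightarrow> D $$ (i,j) = 0"
    "r < n'" "c < n"
  shows "(A * D) $$ (r,c) = A $$ (r,c) * D $$ (c,c)"
proof -
  have "(A * D) $$ (r,c) = (\<Sum>l<n. A $$ (r,l) * D $$ (l,c))" by (rule mult_entry) (use assms in auto)
  also have "\<dots> = (\<Sum>l<n. if l = c then A $$ (r,c) * D $$ (c,c) else 0)"
    by (rule sum.cong) (use assms in auto)
  also have "\<dots> = A $$ (r,c) * D $$ (c,c)" using assms by simp
  finally show ?thesis .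
qed

lemma spm_left:
  assumes "A \<in> carrier_mat n n'" "r < n" "c < n'" "p r < n"
  shows "(spm n p s * A) $$ (r,c) = s r * A $$ (p r, c)"
proof -
  have "(spm n p s * A) $$ (r,c) = (\<Sum>l<n. spm n p s $$ (r,l) * A $$ (l,c))" by (rule mult_entry) (use assms in auto)
  also have "\<dots> = (\<Sum>l<n. if l = p r then s r * A $$ (p r,c) else 0)"
    by (rule sum.cong) (use assms in auto)
  also have "\<dots> = s r * A $$ (p r, c)" using assms by simp
  finally show ?thesis .
qed

lemma spm_right:
  assumes "A \<in> carrier_mat n' n" "r < n'" "c < n" "q < n" "\<And>l. l < n \<Longrightarrow> (c = p l) = (l = q)"
  shows "(A * spm n p s) $$ (r,c) = A $$ (r,q) * s q"
proof -
  have "(A * spm n p s) $$ (r,c) = (\<Sum>l<n. A $$ (r,l) * spm n p s $$ (l,c))" by (rule mult_entry) (use assms in auto)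
  also have "\<dots> = (\<Sum>l<n. if l = q then A $$ (r,q) * s q else 0)"
    by (rule sum.cong) (use assms in auto)
  also have "\<dots> = A $$ (r,q) * s q" using assms by simp
  finally show ?thesis .
qed

lemma w0_spm: "w0dot m = spm (2*m) (\<lambda>r. 2*m-1-r) (\<lambda>r. (-1)^r)"
  unfolding w0_spmi
proof (rule eq_matI)
  fix i j assume "i < dim_row (spm (2*m) (\<lambda>r. 2*m-1-r) (\<lambda>r. (-1)^r))" "j < dim_col (spm (2*m) (\<lambda>r. 2*m-1-r) (\<lambda>r. (-1)^r))"
  hence ij: "i < 2*m" "j < 2*m" by auto
  have "nat (2 * int m - 1 - int i) = 2*m-1-i" using ij by auto
  thus "spmi (2*m) (\<lambda>x. 2 * int m - 1 - x) (\<lambda>x. x) $$ (i,j) = spm (2*m) (\<lambda>r. 2*m-1-r) (\<lambda>r. (-1)^r) $$ (i,j)"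
    using ij by (simp add: spmi_def spme_def)
qed (auto simp: spmi_def spme_def)

lemma wP_spm:
  assumes "2 \<le> m"
  shows "wPdot m = spm (2*m) (\<lambda>r. if r = 0 \<or> r = 2*m-1 then r else 2*m-1-r) (\<lambda>r. if r = 0 \<or> r = 2*m-1 then 1 else (-1)^(r-1))"
  unfolding wP_spmi[OF assms]
proof (rule eq_matI)
  fix i j assume "i < dim_row (spm (2*m) (\<lambda>r. if r = 0 \<or> r = 2*m-1 then r else 2*m-1-r) (\<lambda>r. if r = 0 \<or> r = 2*m-1 then 1 else (-1)^(r-1)))"
    "j < dim_col (spm (2*m) (\<lambda>r. if r = 0 \<or> r = 2*m-1 then r else 2*m-1-r) (\<lambda>r. if r = 0 \<or> r = 2*m-1 then 1 else (-1)^(r-1)))"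
  hence ij: "i < 2*m" "j < 2*m" by auto
  have a: "nat (if int i = 0 \<or> int i = 2 * int m - 1 then int i else 2 * int m - 1 - int i) =
     (if i = 0 \<or> i = 2*m-1 then i else 2*m-1-i)" using ij by auto
  have b: "nat (if int i = 0 \<or> int i = 2 * int m - 1 then 0 else int i - 1) =
     (if i = 0 \<or> i = 2*m-1 then 0 else i-1)" using ij by auto
  show "spmi (2*m) (\<lambda>x. if x = 0 \<or> x = 2 * int m - 1 then x else 2 * int m - 1 - x)
          (\<lambda>x. if x = 0 \<or> x = 2 * int m - 1 then 0 else x - 1) $$ (i,j) =
    spm (2*m) (\<lambda>r. if r = 0 \<or> r = 2*m-1 then r else 2*m-1-r) (\<lambda>r. if r = 0 \<or> r = 2*m-1 then 1 else (-1)^(r-1)) $$ (i,j)"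
    using ij by (simp only: spmi_def spme_def spm_index a b) simp
qed (auto simp: spmi_def spme_def)

lemma J_spm:
  "Jmat m = spm (2*m) (\<lambda>r. 2*m-1-r) (\<lambda>r. (-1)^(r+1))"
  by (rule eq_matI) (auto simp: Jmat_def)

lemma J_carrier[simp]: "Jmat m \<in> carrier_mat (2*m) (2*m)"
  by (simp add: Jmat_def)

lemma JJ: "m \<ge> 1 \<Longrightarrow> Jmat m * Jmat m = (-1) \<cdot>\<^sub>m 1\<^sub>m (2*m)"
proof -
  assume m: "m \<ge> 1"
  have "Jmat m * Jmat m = spm (2*m) (\<lambda>r. 2*m-1-(2*m-1-r)) (\<lambda>r. (-1)^(r+1) * (-1)^(2*m-1-r+1))"
    unfolding J_spm by (rule spm_mult) auto
  also have "\<dots> = (-1) \<cdot>\<^sub>m 1\<^sub>m (2*m)"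
  proof (rule eq_matI)
    fix i j assume "i < dim_row ((-1) \<cdot>\<^sub>m 1\<^sub>m (2*m) :: complex mat)" "j < dim_col ((-1) \<cdot>\<^sub>m 1\<^sub>m (2*m) :: complex mat)"
    hence ij: "i < 2*m" "j < 2*m" by auto
    have "(-1::complex)^(i+1) * (-1)^(2*m-1-i+1) = (-1)^(i+1 + (2*m-1-i+1))" by (simp add: power_add)
    also have "i+1 + (2*m-1-i+1) = 2*m + 1" using ij by auto
    finally have "(-1::complex)^(i+1) * (-1)^(2*m-1-i+1) = -1" by simp
    moreover have "2*m-1-(2*m-1-i) = i" using ij by auto
    ultimately show "spm (2*m) (\<lambda>r. 2*m-1-(2*m-1-r)) (\<lambda>r. (-1)^(r+1) * (-1)^(2*m-1-r+1)) $$ (i,j) = ((-1) \<cdot>\<^sub>m 1\<^sub>m (2*m)) $$ (i,j)"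
      using ij by auto
  qed auto
  finally show ?thesis .
qed

lemma neg_neg_smult[simp]: "(-1::complex) \<cdot>\<^sub>m ((-1) \<cdot>\<^sub>m A) = A"
  by (rule eq_matI) auto

lemma sp_transpose:
  assumes m: "m \<ge> 1" and A: "A \<in> carrier_mat (2*m) (2*m)" and S: "transpose_mat A * Jmat m * A = Jmat m"
  shows "A * Jmat m * transpose_mat A = Jmat m"
proof -
  define n where "n = 2*m"
  define J where "J = Jmat m"
  define K where "K = (-1) \<cdot>\<^sub>m J"
  have Jc: "J \<in> carrier_mat n n" and Kc: "K \<in> carrier_mat n n" and Ac: "A \<in> carrier_mat n n"
    and Atc: "transpose_mat A \<in> carrier_mat n n"
    using A by (auto simp: J_def K_def n_def)
  have JJ': "J * J = (-1) \<cdot>\<^sub>m 1\<^sub>m n" using JJ[OF m] by (simp add: J_def n_def)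
  have JK: "J * K = 1\<^sub>m n"
    unfolding K_def using JJ' Jc by (simp add: mult_smult_distrib[OF Jc Jc])
  have KJ: "K * J = 1\<^sub>m n"
    unfolding K_def using JJ' Jc by (simp add: mult_smult_assoc_mat[OF Jc Jc])
  have S': "transpose_mat A * J * A = J" using S by (simp add: J_def)
  have "transpose_mat A * (J * A * K) = (transpose_mat A * J * A) * K"
    using Ac Jc Kc Atc by (simp add: assoc_mult_mat[of _ n n _ n _ n])
  also have "\<dots> = 1\<^sub>m n" using S' JK by simp
  finally have AB: "transpose_mat A * (J * A * K) = 1\<^sub>m n" .
  have "(J * A * K) * transpose_mat A = 1\<^sub>m n"
    by (rule mat_mult_left_right_inverse[OF Atc _ AB]) (use Ac Jc Kc in auto)
  hence "K * ((J * A * K) * transpose_mat A) = K" using Kc by simp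
  moreover have "K * ((J * A * K) * transpose_mat A) = (K * J) * A * K * transpose_mat A"
    using Ac Jc Kc Atc by (simp add: assoc_mult_mat[of _ n n _ n _ n])
  ultimately have "A * K * transpose_mat A = K" using KJ Ac by simp
  hence "(-1) \<cdot>\<^sub>m (A * J * transpose_mat A) = (-1) \<cdot>\<^sub>m J"
    unfolding K_def using Ac Jc Atc
    by (simp add: mult_smult_distrib[OF Ac Jc] mult_smult_assoc_mat[of _ n n _ n])
  hence "(-1) \<cdot>\<^sub>m ((-1) \<cdot>\<^sub>m (A * J * transpose_mat A)) = (-1) \<cdot>\<^sub>m ((-1) \<cdot>\<^sub>m J)" by simp
  thus ?thesis by (simp add: J_def)
qed


lemma wordmat_comm:
  assumes "\<forall>i\<in>set w. sdot m i * d = d * sdot m i" "d \<in> carrier_mat (2*m) (2*m)"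
  shows "wordmat m w * d = d * wordmat m w"
  using assms(1)
proof (induction w)
  case Nil thus ?case using assms(2) by (simp add: wordmat_def)
next
  case (Cons i w)
  have W: "wordmat m w \<in> carrier_mat (2*m) (2*m)" by simp
  have S: "sdot m i \<in> carrier_mat (2*m) (2*m)" by simp
  have "wordmat m (i # w) * d = sdot m i * wordmat m w * d" by (simp add: wordmat_def)
  also have "\<dots> = sdot m i * (wordmat m w * d)" by (rule assoc_mult_mat[OF S W assms(2)])
  also have "\<dots> = sdot m i * (d * wordmat m w)" using Cons by simp
  also have "\<dots> = (sdot m i * d) * wordmat m w" by (rule assoc_mult_mat[OF S assms(2) W, symmetric])
  also have "\<dots> = (d * sdot m i) * wordmat m w" using Cons by simp
  also have "\<dots> = d * (sdot m i * wordmat m w)" by (rule assoc_mult_mat[OF assms(2) S W])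
  also have "\<dots> = d * wordmat m (i # w)" by (simp add: wordmat_def)
  finally show ?case .
qed

lemma solve_lin: "(A::complex) \<noteq> 0 \<Longrightarrow> A * u + B = 0 \<Longrightarrow> u = - B / A"
  by (simp add: eq_divide_eq add_eq_0_iff)

lemma sign_sq: "((-1::complex)^k) * (-1)^k = 1"
  by (simp add: power_mult_distrib[symmetric])

lemma sign_rev: "j \<le> l \<Longrightarrow> (-1::complex)^(l+1) * (-1)^(l-j+1) = (-1)^j"
proof -
  assume "j \<le> l"
  hence "l+1 + (l-j+1) = j + 2*(l-j+1)" by auto
  hence "(-1::complex)^(l+1) * (-1)^(l-j+1) = (-1)^(j + 2*(l-j+1))" by (metis power_add)
  thus ?thesis by (simp add: power_add power_mult)
qed

theorem mainTheorem4:
  fixes m :: nat and d z u1 u2 :: "complex mat"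
  assumes "m \<ge> 2"
    and "d \<in> TorWP m"
    and "z \<in> Zd m d"
    and "u1 \<in> UplusWP m" and "u2 \<in> Uminus m"
    and "z = u1 * wPdot m * d * u2"
    and "plk m z 0 \<noteq> 0" and "plk m z (2*m-1) \<noteq> 0"
    and "\<forall>l\<in>{1..m-1}. Dden m (plk m z) l \<noteq> 0"
  shows "Fsum m u1 u2 = Wq m (alpha1 d) (plk m z)"
proof -
  define n where "n = 2*m"
  have n4: "4 \<le> n" using assms(1) by (simp add: n_def)
  have entI: "\<And>g r c. ent g (r+1) (c+1) = g $$ (r,c)" by (simp add: ent_def)
  have dT: "d \<in> Tor m" and dcomm: "\<forall>i\<in>{2..m}. sdot m i * d = d * sdot m i"
    using assms(2) by (auto simp: TorWP_def)
  have dcar: "d \<in> carrier_mat n n" using dT by (auto simp: Tor_def Sp_def n_def)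
  have ddiag: "\<And>r c. r < n \<Longrightarrow> c < n \<Longrightarrow> r \<noteq> c \<Longrightarrow> d $$ (r,c) = 0"
  proof -
    fix r c assume "r < n" "c < n" "r \<noteq> c"
    hence "r+1 \<in> {1..2*m}" "c+1 \<in> {1..2*m}" "r+1 \<noteq> c+1" by (auto simp: n_def)
    thus "d $$ (r,c) = 0" using dT unfolding Tor_def entI[symmetric] by blast
  qed
  have dinv: "\<And>r. r < n \<Longrightarrow> d $$ (r,r) * d $$ (n-1-r, n-1-r) = 1"
  proof -
    fix r assume r: "r < n"
    hence "r+1 \<in> {1..2*m}" by (auto simp: n_def)
    hence "ent d (r+1) (r+1) * ent d (2*m+1-(r+1)) (2*m+1-(r+1)) = 1" using dT unfolding Tor_def by blast
    moreover have "2*m+1-(r+1) = (n-1-r)+1" using r by (auto simp: n_def)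
    ultimately show "d $$ (r,r) * d $$ (n-1-r, n-1-r) = 1" by (simp add: ent_def n_def)
  qed
  obtain b where bB: "b \<in> Bminus m" and zb: "z = b * w0dot m" using assms(3) by (auto simp: Zd_def)
  have bcar: "b \<in> carrier_mat n n" using bB by (auto simp: Bminus_def Sp_def n_def)
  have bup: "\<And>r c. r < c \<Longrightarrow> c < n \<Longrightarrow> b $$ (r,c) = 0"
  proof -
    fix r c assume "r < c" "c < n"
    hence "r+1 \<in> {1..2*m}" "c+1 \<in> {1..2*m}" "r+1 < c+1" by (auto simp: n_def)
    thus "b $$ (r,c) = 0" using bB unfolding Bminus_def entI[symmetric] by blast
  qed
  have u1U: "u1 \<in> Uplus m" and u1WP: "\<exists>v\<in>Uplus m. u1 * wPdot m = wPdot m * v"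
    using assms(4) by (auto simp: UplusWP_def)
  have u1car: "u1 \<in> carrier_mat n n" and u1Sp: "transpose_mat u1 * Jmat m * u1 = Jmat m"
    using u1U by (auto simp: Uplus_def Sp_def n_def)
  have u1low: "\<And>r c. c < r \<Longrightarrow> r < n \<Longrightarrow> u1 $$ (r,c) = 0"
  proof -
    fix r c assume "c < r" "r < n"
    hence "r+1 \<in> {1..2*m}" "c+1 \<in> {1..2*m}" "c+1 < r+1" by (auto simp: n_def)
    thus "u1 $$ (r,c) = 0" using u1U unfolding Uplus_def entI[symmetric] by blast
  qed
  have u1diag: "\<And>r. r < n \<Longrightarrow> u1 $$ (r,r) = 1"
  proof -
    fix r assume "r < n"
    hence "r+1 \<in> {1..2*m}" by (auto simp: n_def)
    thus "u1 $$ (r,r) = 1" using u1U unfolding Uplus_def entI[symmetric] by blast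
  qed
  have u2car: "u2 \<in> carrier_mat n n" and u2Sp: "transpose_mat u2 * Jmat m * u2 = Jmat m"
    using assms(5) by (auto simp: Uminus_def Sp_def n_def)
  have u2up: "\<And>r c. r < c \<Longrightarrow> c < n \<Longrightarrow> u2 $$ (r,c) = 0"
  proof -
    fix r c assume "r < c" "c < n"
    hence "r+1 \<in> {1..2*m}" "c+1 \<in> {1..2*m}" "r+1 < c+1" by (auto simp: n_def)
    thus "u2 $$ (r,c) = 0" using assms(5) unfolding Uminus_def entI[symmetric] by blast
  qed
  have u2diag: "\<And>r. r < n \<Longrightarrow> u2 $$ (r,r) = 1"
  proof -
    fix r assume "r < n"
    hence "r+1 \<in> {1..2*m}" by (auto simp: n_def)
    thus "u2 $$ (r,r) = 1" using assms(5) unfolding Uminus_def entI[symmetric] by blast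
  qed
  define pP where "pP = (\<lambda>r. if r = 0 \<or> r = n-1 then r else n-1-r)"
  define sP where "sP = (\<lambda>r. if r = 0 \<or> r = n-1 then 1 else (-1::complex)^(r-1))"
  have wP: "wPdot m = spm n pP sP" unfolding wP_spm[OF assms(1)] pP_def sP_def n_def ..
  have w0: "w0dot m = spm n (\<lambda>r. n-1-r) (\<lambda>r. (-1)^r)" unfolding w0_spm n_def ..
  have J: "Jmat m = spm n (\<lambda>r. n-1-r) (\<lambda>r. (-1)^(r+1))" unfolding J_spm n_def ..
  have pPr: "\<And>r. r < n \<Longrightarrow> pP r < n" by (auto simp: pP_def)
  have sPnz: "\<And>r. sP r \<noteq> 0" by (simp add: sP_def)
  have wPcar: "wPdot m \<in> carrier_mat n n" unfolding wP by simp

  have Jcar: "Jmat m \<in> carrier_mat n n" by (simp add: n_def)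
  have dwP: "wPdot m * d = d * wPdot m"
    unfolding wPdot_def by (rule wordmat_comm) (use dcomm dcar in \<open>auto simp: n_def\<close>)
  define \<delta> where "\<delta> = (\<lambda>c. d $$ (c,c))"
  have e1: "(wPdot m * d) $$ (1, n-2) = \<delta> (n-2)"
    unfolding wP using n4 dcar pPr by (subst spm_left) (auto simp: pP_def sP_def \<delta>_def numeral_2_eq_2)
  have e2: "(d * wPdot m) $$ (1, n-2) = \<delta> 1"
    using n4 dcar wPcar by (subst diag_left[OF dcar wPcar ddiag]) (auto simp: wP pP_def sP_def \<delta>_def)
  have d1: "\<delta> 1 = \<delta> (n-2)" using e1 e2 dwP by simp
  have bsq: "\<delta> 1 * \<delta> 1 = 1" using dinv[of 1] n4 d1 by (simp add: \<delta>_def numeral_2_eq_2)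
  have a_inv: "\<delta> 0 * \<delta> (n-1) = 1" using dinv[of 0] n4 by (simp add: \<delta>_def)
  have \<delta>nz: "\<And>c. c < n \<Longrightarrow> \<delta> c \<noteq> 0" using dinv by (metis \<delta>_def mult_zero_left zero_neq_one)
  obtain v where vU: "v \<in> Uplus m" and u1v: "u1 * wPdot m = wPdot m * v" using u1WP by blast
  have vcar: "v \<in> carrier_mat n n" using vU by (auto simp: Uplus_def Sp_def n_def)
  have vlow: "\<And>r c. c < r \<Longrightarrow> r < n \<Longrightarrow> v $$ (r,c) = 0"
  proof -
    fix r c assume "c < r" "r < n"
    hence "r+1 \<in> {1..2*m}" "c+1 \<in> {1..2*m}" "c+1 < r+1" by (auto simp: n_def)
    thus "v $$ (r,c) = 0" using vU unfolding Uplus_def entI[symmetric] by blast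
  qed
  have u1mid: "\<And>r c. 1 \<le> r \<Longrightarrow> r < c \<Longrightarrow> c \<le> n-2 \<Longrightarrow> u1 $$ (r,c) = 0"
  proof -
    fix r c assume rc: "1 \<le> r" "r < c" "c \<le> n-2"
    have "(u1 * wPdot m) $$ (r, n-1-c) = u1 $$ (r,c) * sP c"
      unfolding wP by (rule spm_right[OF u1car]) (use rc n4 in \<open>auto simp: pP_def\<close>)
    moreover have "(wPdot m * v) $$ (r, n-1-c) = sP r * v $$ (pP r, n-1-c)"
      unfolding wP by (rule spm_left[OF vcar]) (use rc n4 in \<open>auto simp: pP_def\<close>)
    moreover have "v $$ (pP r, n-1-c) = 0" using rc n4 by (intro vlow) (auto simp: pP_def)
    ultimately have "u1 $$ (r,c) * sP c = 0" using u1v by simp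
    thus "u1 $$ (r,c) = 0" using sPnz by simp
  qed
  have zanti: "\<And>r c. r < n \<Longrightarrow> c < n \<Longrightarrow> r + c \<le> n-2 \<Longrightarrow> z $$ (r,c) = 0"
  proof -
    fix r c assume rc: "r < n" "c < n" "r + c \<le> n-2"
    have "z $$ (r,c) = b $$ (r, n-1-c) * (-1)^(n-1-c)"
      unfolding zb w0 by (rule spm_right[OF bcar]) (use rc in auto)
    also have "b $$ (r, n-1-c) = 0" using rc n4 by (intro bup) linarith+
    finally show "z $$ (r,c) = 0" by simp
  qed
  define N where "N = wPdot m * (d * u2)"
  have du2car: "d * u2 \<in> carrier_mat n n" using dcar u2car by simp
  have Ncar: "N \<in> carrier_mat n n" unfolding N_def using wPcar du2car by simp
  have Nidx: "\<And>r c. r < n \<Longrightarrow> c < n \<Longrightarrow> N $$ (r,c) = sP r * \<delta> (pP r) * u2 $$ (pP r, c)"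
  proof -
    fix r c assume rc: "r < n" "c < n"
    have "N $$ (r,c) = sP r * (d * u2) $$ (pP r, c)"
      unfolding N_def wP by (rule spm_left[OF du2car rc]) (rule pPr[OF rc(1)])
    also have "(d * u2) $$ (pP r, c) = \<delta> (pP r) * u2 $$ (pP r, c)"
      unfolding \<delta>_def by (rule diag_left[OF dcar u2car ddiag pPr[OF rc(1)] rc(2)])
    finally show "N $$ (r,c) = sP r * \<delta> (pP r) * u2 $$ (pP r, c)" by simp
  qed
  have zN: "z = u1 * N"
  proof -
    have "z = ((u1 * wPdot m) * d) * u2" using assms(6) by simp
    also have "\<dots> = (u1 * wPdot m) * (d * u2)"
      by (rule assoc_mult_mat) (use u1car wPcar dcar u2car in auto)
    also have "\<dots> = u1 * N" unfolding N_def
      by (rule assoc_mult_mat) (use u1car wPcar du2car in auto)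
    finally show ?thesis .
  qed
  have zrow: "\<And>r c. 1 \<le> r \<Longrightarrow> r \<le> n-2 \<Longrightarrow> c < n \<Longrightarrow> z $$ (r,c) = N $$ (r,c) + u1 $$ (r,n-1) * N $$ (n-1,c)"
  proof -
    fix r c assume rc: "1 \<le> r" "r \<le> n-2" "c < n"
    have "z $$ (r,c) = (\<Sum>l<n. u1 $$ (r,l) * N $$ (l,c))"
      unfolding zN by (rule mult_entry[OF u1car Ncar]) (use rc n4 in auto)
    also have "\<dots> = (\<Sum>l<n. (if l = r then 1 else if l = n-1 \<and> True then u1 $$ (r,n-1) else 0) * N $$ (l,c))"
    proof (rule sum.cong)
      fix l assume "l \<in> {..<n}"
      hence l: "l < n" by simp
      show "u1 $$ (r,l) * N $$ (l,c) = (if l = r then 1 else if l = n-1 \<and> True then u1 $$ (r,n-1) else 0) * N $$ (l,c)"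
        using u1low[of l r] u1diag[of r] u1mid[of r l] rc l by (cases "l < r") auto
    qed simp
    also have "\<dots> = N $$ (r,c) + u1 $$ (r,n-1) * N $$ (n-1,c)"
    proof -
      have "r < n" "n - 1 \<noteq> r" "n - 1 < n" using rc n4 by auto
      thus ?thesis unfolding sum_if2_left by simp
    qed
    finally show "z $$ (r,c) = N $$ (r,c) + u1 $$ (r,n-1) * N $$ (n-1,c)" .
  qed
  have zlast: "\<And>c. c < n \<Longrightarrow> z $$ (n-1,c) = N $$ (n-1,c)"
  proof -
    fix c assume c: "c < n"
    have "z $$ (n-1,c) = (\<Sum>l<n. u1 $$ (n-1,l) * N $$ (l,c))"
      unfolding zN by (rule mult_entry[OF u1car Ncar]) (use c n4 in auto)
    also have "\<dots> = (\<Sum>l<n. if l = n-1 then N $$ (n-1,c) else 0)"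
    proof (rule sum.cong)
      fix l assume "l \<in> {..<n}"
      hence l: "l < n" by simp
      show "u1 $$ (n-1,l) * N $$ (l,c) = (if l = n-1 then N $$ (n-1,c) else 0)"
        using u1low[of l "n-1"] u1diag[of "n-1"] l n4 by auto
    qed simp
    also have "\<dots> = N $$ (n-1,c)" using n4 by simp
    finally show "z $$ (n-1,c) = N $$ (n-1,c)" .
  qed
  define R where "R = (\<lambda>c. u2 $$ (n-1, c))"
  have R1: "R (n-1) = 1" unfolding R_def using u2diag n4 by simp
  have Nlast: "\<And>c. c < n \<Longrightarrow> N $$ (n-1,c) = \<delta> (n-1) * R c"
    using Nidx n4 by (simp add: pP_def sP_def R_def)
  have pk: "\<And>k. k < n \<Longrightarrow> plk m z k = \<delta> (n-1) * R (n-1-k)"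
  proof -
    fix k assume k: "k < n"
    have "plk m z k = z $$ (n-1, n-1-k)" unfolding plk_def ent_def n_def using k
      by (simp add: n_def)
    thus "plk m z k = \<delta> (n-1) * R (n-1-k)" using zlast Nlast k by simp
  qed

  define C where "C = (\<lambda>j. - u1 $$ (n-1-j, n-1) * \<delta> (n-1) / (sP (n-1-j) * \<delta> j))"
  have E1raw: "\<And>j c. 1 \<le> j \<Longrightarrow> j \<le> n-2 \<Longrightarrow> c < j \<Longrightarrow>
      sP (n-1-j) * \<delta> j * u2 $$ (j,c) + u1 $$ (n-1-j, n-1) * (\<delta> (n-1) * R c) = 0"
  proof -
    fix j c assume jc: "1 \<le> j" "j \<le> n-2" "c < j"
    have "z $$ (n-1-j, c) = 0" using jc by (intro zanti) auto
    moreover have "z $$ (n-1-j, c) = N $$ (n-1-j,c) + u1 $$ (n-1-j,n-1) * N $$ (n-1,c)"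
      using jc by (intro zrow) auto
    moreover have "N $$ (n-1-j,c) = sP (n-1-j) * \<delta> j * u2 $$ (j,c)"
    proof -
      have pj: "pP (n-1-j) = j" using jc n4 by (auto simp: pP_def)
      show ?thesis using Nidx[of "n-1-j" c] jc pj by simp
    qed
    moreover have "N $$ (n-1,c) = \<delta> (n-1) * R c" using Nlast jc by simp
    ultimately show "sP (n-1-j) * \<delta> j * u2 $$ (j,c) + u1 $$ (n-1-j, n-1) * (\<delta> (n-1) * R c) = 0" by simp
  qed
  have E1: "\<And>j c. 1 \<le> j \<Longrightarrow> j \<le> n-2 \<Longrightarrow> c < j \<Longrightarrow> u2 $$ (j,c) = C j * R c"
  proof -
    fix j c assume jc: "1 \<le> j" "j \<le> n-2" "c < j"
    have nz: "sP (n-1-j) * \<delta> j \<noteq> 0" using sPnz \<delta>nz[of j] jc by simp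
    have "u2 $$ (j,c) = - (u1 $$ (n-1-j, n-1) * (\<delta> (n-1) * R c)) / (sP (n-1-j) * \<delta> j)"
      by (rule solve_lin[OF nz]) (use E1raw[OF jc] in \<open>simp add: mult.assoc\<close>)
    thus "u2 $$ (j,c) = C j * R c" unfolding C_def using nz by simp
  qed
  have u2Sp': "u2 * Jmat m * transpose_mat u2 = Jmat m"
    by (rule sp_transpose) (use assms(1) u2car u2Sp in \<open>auto simp: n_def\<close>)
  define S where "S = (\<lambda>j. \<Sum>k<j. (-1::complex)^(k+1) * R k * R (n-1-k))"
  have E2: "\<And>j. 1 \<le> j \<Longrightarrow> j \<le> n-2 \<Longrightarrow> C j * S j + (-1)^(j+1) * R (n-1-j) = 0"
  proof -
    fix j assume j: "1 \<le> j" "j \<le> n-2"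
    have u2t: "transpose_mat u2 \<in> carrier_mat n n" using u2car by simp
    have JU: "Jmat m * transpose_mat u2 \<in> carrier_mat n n" using Jcar u2t by simp
    have JUidx: "\<And>k. k < n \<Longrightarrow> (Jmat m * transpose_mat u2) $$ (k, n-1) = (-1)^(k+1) * R (n-1-k)"
    proof -
      fix k assume k: "k < n"
      have "(Jmat m * transpose_mat u2) $$ (k, n-1) = (-1)^(k+1) * transpose_mat u2 $$ (n-1-k, n-1)"
        unfolding J by (rule spm_left[OF u2t]) (use k in auto)
      thus "(Jmat m * transpose_mat u2) $$ (k, n-1) = (-1)^(k+1) * R (n-1-k)"
        using k u2car n4 by (simp add: R_def)
    qed
    have "0 = Jmat m $$ (j, n-1)" using j n4 by (simp add: Jmat_def n_def)
    also have "\<dots> = (u2 * (Jmat m * transpose_mat u2)) $$ (j, n-1)"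
      using u2Sp' assoc_mult_mat[OF u2car Jcar u2t] by simp
    also have "\<dots> = (\<Sum>k<n. u2 $$ (j,k) * (Jmat m * transpose_mat u2) $$ (k, n-1))"
      by (rule mult_entry[OF u2car JU]) (use j n4 in auto)
    also have "\<dots> = (\<Sum>k<n. u2 $$ (j,k) * ((-1)^(k+1) * R (n-1-k)))"
      by (rule sum.cong) (use JUidx in auto)
    also have "\<dots> = (\<Sum>k<j. u2 $$ (j,k) * ((-1)^(k+1) * R (n-1-k))) + (\<Sum>k=j..<n. u2 $$ (j,k) * ((-1)^(k+1) * R (n-1-k)))"
      using j n4 by (simp add: lessThan_atLeast0 sum.atLeastLessThan_concat)
    also have "(\<Sum>k<j. u2 $$ (j,k) * ((-1)^(k+1) * R (n-1-k))) = C j * S j"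
      unfolding S_def sum_distrib_left by (rule sum.cong) (use E1 j in auto)
    also have "(\<Sum>k=j..<n. u2 $$ (j,k) * ((-1)^(k+1) * R (n-1-k))) =
        u2 $$ (j,j) * ((-1)^(j+1) * R (n-1-j)) + (\<Sum>k=Suc j..<n. u2 $$ (j,k) * ((-1)^(k+1) * R (n-1-k)))"
      using j n4 by (subst sum.atLeast_Suc_lessThan) auto
    also have "(\<Sum>k=Suc j..<n. u2 $$ (j,k) * ((-1)^(k+1) * R (n-1-k))) = 0"
      by (rule sum.neutral) (use u2up in auto)
    finally show "C j * S j + (-1)^(j+1) * R (n-1-j) = 0" using u2diag j n4 by simp
  qed
  have E3: "u1 $$ (0,1) = u1 $$ (n-2, n-1)"
  proof -
    have u1t: "transpose_mat u1 \<in> carrier_mat n n" using u1car by simp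
    have UJ: "transpose_mat u1 * Jmat m \<in> carrier_mat n n" using Jcar u1t by simp
    have UJidx: "\<And>l. l < n \<Longrightarrow> (transpose_mat u1 * Jmat m) $$ (1, l) = (if l = n-1 then - u1 $$ (0,1) else if l = n-2 \<and> True then 1 else 0)"
    proof -
      fix l assume l: "l < n"
      have "(transpose_mat u1 * Jmat m) $$ (1, l) = transpose_mat u1 $$ (1, n-1-l) * (-1)^(n-1-l+1)"
        unfolding J by (rule spm_right[OF u1t]) (use l n4 in auto)
      also have "\<dots> = u1 $$ (n-1-l, 1) * (-1)^(n-1-l+1)" using l n4 u1car by simp
      finally show "(transpose_mat u1 * Jmat m) $$ (1, l) = (if l = n-1 then - u1 $$ (0,1) else if l = n-2 \<and> True then 1 else 0)"
        using l n4 u1diag[of 1] u1low[of 1 "n-1-l"] by (auto simp: numeral_2_eq_2)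
    qed
    have "0 = Jmat m $$ (1, n-1)" using n4 by (simp add: Jmat_def n_def)
    also have "\<dots> = (transpose_mat u1 * Jmat m * u1) $$ (1, n-1)" using u1Sp by simp
    also have "\<dots> = (\<Sum>l<n. (transpose_mat u1 * Jmat m) $$ (1,l) * u1 $$ (l, n-1))"
      by (rule mult_entry[OF UJ u1car]) (use n4 in auto)
    also have "\<dots> = (\<Sum>l<n. (if l = n-1 then - u1 $$ (0,1) else if l = n-2 \<and> True then 1 else 0) * u1 $$ (l, n-1))"
      by (rule sum.cong) (use UJidx in auto)
    also have "\<dots> = - u1 $$ (0,1) * u1 $$ (n-1,n-1) + u1 $$ (n-2,n-1)"
      unfolding sum_if2_left using n4 by simp
    finally show ?thesis using u1diag[of "n-1"] n4 by simp
  qed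

  have p_eq: "plk m z = (\<lambda>k. if k < n then \<delta> (n-1) * R (n-1-k) else plk m z k)"
    using pk by auto
  have enz: "\<delta> (n-1) \<noteq> 0" using \<delta>nz n4 by simp
  have R0: "R 0 \<noteq> 0" using assms(8) pk[of "n-1"] n4 by (simp add: n_def)
  have sPn2: "sP (n-2) = -1"
  proof -
    have "sP (n-2) = (-1)^(n-3)" using n4 by (simp add: sP_def numeral_2_eq_2 numeral_3_eq_3)
    moreover have "odd (n-3)" using n4 by (simp add: n_def)
    ultimately show ?thesis by simp
  qed
  have T1a: "u2 $$ (1,0) = R (n-2)"
  proof -
    have "u2 $$ (1,0) = C 1 * R 0" using E1[of 1 0] n4 by simp
    moreover have "C 1 * S 1 + R (n-2) = 0" using E2[of 1] n4 by (simp add: numeral_2_eq_2)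
    moreover have "S 1 = - R 0" using R1 n4 by (simp add: S_def)
    ultimately show ?thesis by (simp add: algebra_simps)
  qed
  have T1: "u2 $$ (1,0) = plk m z 1 / plk m z 0"
    using T1a pk[of 1] pk[of 0] n4 enz R1 by (simp add: numeral_2_eq_2)
  have T3: "u1 $$ (0,1) = alpha1 d * plk m z 1 / plk m z (2*m-1)"
  proof -
    have "u2 $$ (1,0) = C 1 * R 0" using E1[of 1 0] n4 by simp
    hence "R (n-2) = u1 $$ (n-2, n-1) * \<delta> (n-1) * R 0 / \<delta> 1"
      using T1a sPn2 n4 by (simp add: C_def numeral_2_eq_2)
    hence u: "u1 $$ (0,1) = R (n-2) * \<delta> 1 / (\<delta> (n-1) * R 0)"
      using E3 \<delta>nz[of 1] enz R0 n4 by (simp add: field_simps)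
    have q: "alpha1 d = \<delta> 0 / \<delta> 1" by (simp add: alpha1_def ent_def \<delta>_def)
    have p1: "plk m z 1 = \<delta> (n-1) * R (n-2)" using pk[of 1] n4 by (simp add: numeral_2_eq_2)
    have p2: "plk m z (2*m-1) = \<delta> (n-1) * R 0" using pk[of "n-1"] n4 by (simp add: n_def)
    have b0: "\<delta> 1 \<noteq> 0" using \<delta>nz[of 1] n4 by simp
    have h1: "\<delta> 0 = 1 / \<delta> (n-1)" using a_inv enz by (simp add: field_simps)
    have h2: "1 / \<delta> 1 = \<delta> 1" using bsq b0 by (simp add: field_simps)
    have "alpha1 d * plk m z 1 / plk m z (2*m-1) = \<delta> 0 * R (n-2) / (\<delta> 1 * R 0)"
      unfolding q p1 p2 using enz R0 b0 by (simp add: field_simps)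
    also have "\<dots> = R (n-2) * (1 / \<delta> 1) / (\<delta> (n-1) * R 0)"
      unfolding h1 using enz R0 b0 by (simp add: field_simps)
    also have "\<dots> = R (n-2) * \<delta> 1 / (\<delta> (n-1) * R 0)" by (simp only: h2)
    finally show ?thesis using u by simp
  qed
  have T2: "\<And>l. l \<in> {1..m-1} \<Longrightarrow> u2 $$ (l+1, l) = plk m z (l+1) * plk m z (2*m-1-l) / Dden m (plk m z) l"
  proof -
    fix l assume l: "l \<in> {1..m-1}"
    hence l1: "1 \<le> l" "l+1 \<le> n-2" "l + 1 < n" using assms(1) by (auto simp: n_def)
    define s where "s = (-1::complex)^(l+1)"
    have ss: "s * s = 1" unfolding s_def by (rule sign_sq)
    have u: "u2 $$ (l+1, l) = C (l+1) * R l" using E1[of "l+1" l] l1 by simp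
    have e2': "C (l+1) * S (l+1) = - ((-1)^(l+1+1) * R (n-1-(l+1)))"
      using E2[of "l+1"] l1 by (simp only: eq_neg_iff_add_eq_0)
    have e2: "C (l+1) * S (l+1) = s * R (n-2-l)"
      unfolding e2' s_def by (simp add: numeral_2_eq_2)
    have reidx: "(\<Sum>k<Suc l. (-1::complex)^(k+1) * R k * R (n-1-k)) = (\<Sum>j=0..l. (-1)^(l-j+1) * R (l-j) * R (n-1-(l-j)))"
      by (rule sum.reindex_bij_witness[where i="\<lambda>j. l-j" and j="\<lambda>k. l-k"]) auto
    have D: "Dden m (plk m z) l = \<delta> (n-1) * \<delta> (n-1) * (s * S (l+1))"
    proof -
      have "Dden m (plk m z) l = (\<Sum>j=0..l. (-1)^j * (\<delta> (n-1) * R (n-1-(l-j))) * (\<delta> (n-1) * R (l-j)))"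
        unfolding Dden_def
      proof (rule sum.cong)
        fix j assume "j \<in> {0..l}"
        hence j: "j \<le> l" by simp
        have "plk m z (l-j) = \<delta> (n-1) * R (n-1-(l-j))" using pk[of "l-j"] l1 by simp
        moreover have "plk m z (2*m-1-l+j) = \<delta> (n-1) * R (l-j)"
          using pk[of "2*m-1-l+j"] l1 j by (simp add: n_def)
        ultimately show "(-1)^j * plk m z (l-j) * plk m z (2*m-1-l+j) = (-1)^j * (\<delta> (n-1) * R (n-1-(l-j))) * (\<delta> (n-1) * R (l-j))"
          by simp
      qed simp
      also have "\<dots> = \<delta> (n-1) * \<delta> (n-1) * (\<Sum>j=0..l. s * ((-1)^(l-j+1) * R (l-j) * R (n-1-(l-j))))"
        unfolding sum_distrib_left
      proof (rule sum.cong)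
        fix j assume "j \<in> {0..l}"
        hence j: "j \<le> l" by simp
        show "(-1)^j * (\<delta> (n-1) * R (n-1-(l-j))) * (\<delta> (n-1) * R (l-j)) =
          \<delta> (n-1) * \<delta> (n-1) * (s * ((-1)^(l-j+1) * R (l-j) * R (n-1-(l-j))))"
          using sign_rev[OF j] unfolding s_def by (simp add: algebra_simps)
      qed simp
      also have "\<dots> = \<delta> (n-1) * \<delta> (n-1) * (s * S (l+1))"
        unfolding S_def sum_distrib_left[symmetric] using reidx by simp
      finally show ?thesis .
    qed
    have Dnz: "Dden m (plk m z) l \<noteq> 0" using assms(9) l by blast
    hence Snz: "S (l+1) \<noteq> 0" using D by auto
    have p1: "plk m z (l+1) = \<delta> (n-1) * R (n-2-l)" using pk[of "l+1"] l1 by simp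
    have p2: "plk m z (2*m-1-l) = \<delta> (n-1) * R l" using pk[of "2*m-1-l"] l1 by (simp add: n_def)
    have C: "C (l+1) = s * R (n-2-l) / S (l+1)" using e2 Snz by (simp add: field_simps)
    have s0: "s \<noteq> 0" using ss by auto
    have hs: "1 / s = s" using ss s0 by (simp add: field_simps)
    have "(\<delta> (n-1) * R (n-2-l)) * (\<delta> (n-1) * R l) / (\<delta> (n-1) * \<delta> (n-1) * (s * S (l+1)))
        = (1 / s) * (R (n-2-l) * R l / S (l+1))" using Snz enz s0 by (simp add: field_simps)
    also have "\<dots> = s * (R (n-2-l) * R l / S (l+1))" by (simp only: hs)
    also have "\<dots> = s * R (n-2-l) / S (l+1) * R l" using Snz by (simp add: field_simps)
    finally show "u2 $$ (l+1, l) = plk m z (l+1) * plk m z (2*m-1-l) / Dden m (plk m z) l"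
      unfolding u p1 p2 D C by simp
  qed
  have sum1: "(\<Sum>i=1..m. ent u1 i (i+1)) = u1 $$ (0,1)"
  proof -
    have "(\<Sum>i=1..m. ent u1 i (i+1)) = ent u1 1 (1+1) + (\<Sum>i=Suc 1..m. ent u1 i (i+1))"
      using assms(1) by (subst sum.atLeast_Suc_atMost) auto
    also have "(\<Sum>i=Suc 1..m. ent u1 i (i+1)) = 0"
    proof (rule sum.neutral, rule ballI)
      fix i assume "i \<in> {Suc 1..m}"
      hence i: "2 \<le> i" "i \<le> m" by auto
      have "ent u1 i (i+1) = u1 $$ (i-1, i)" by (simp add: ent_def)
      also have "\<dots> = 0" using i by (intro u1mid) (auto simp: n_def)
      finally show "ent u1 i (i+1) = 0" .
    qed
    finally show ?thesis by (simp add: ent_def)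
  qed
  have sum2: "(\<Sum>i=1..m. ent u2 (i+1) i) = u2 $$ (1,0) + (\<Sum>l=1..m-1. u2 $$ (l+1, l))"
  proof -
    have "(\<Sum>i=1..m. ent u2 (i+1) i) = ent u2 (1+1) 1 + (\<Sum>i=Suc 1..Suc (m-1). ent u2 (i+1) i)"
      using assms(1) by (subst sum.atLeast_Suc_atMost) auto
    also have "(\<Sum>i=Suc 1..Suc (m-1). ent u2 (i+1) i) = (\<Sum>l=1..m-1. ent u2 (Suc l+1) (Suc l))"
      by (rule sum.shift_bounds_cl_Suc_ivl)
    finally show ?thesis by (simp add: ent_def)
  qed
  have "Fsum m u1 u2 = u1 $$ (0,1) + (u2 $$ (1,0) + (\<Sum>l=1..m-1. u2 $$ (l+1, l)))"
    unfolding Fsum_def sum1 sum2 ..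
  also have "(\<Sum>l=1..m-1. u2 $$ (l+1, l)) = (\<Sum>l=1..m-1. plk m z (l+1) * plk m z (2*m-1-l) / Dden m (plk m z) l)"
    by (rule sum.cong) (use T2 in auto)
  finally show ?thesis unfolding Wq_def T1 T3 by (simp add: algebra_simps)
qed


end
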